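(* Let $p$ be a prime and let $A$ be a nontrivial finite $p$-group. Then for every integer $k$, $$r_{A\wr \mathbb{Z}/p\mathbb{Z},\,k}=(1-p^{-1})\,r_{A,k}+\frac{r_{A,k-1}^{\,p}}{p}.$$
   Context: For a finite $p$-group $G$ with $|G|=p^g$ and maximum element order $p^{f}$, and for $k\in\mathbb{Z}$, define $r_{G,k}=\frac{1}{p^g}\cdot\#\{x\in G:\ \mathrm{order}(x)\le p^{f-k}\}$. For groups $A,B$, let $K=\prod_{b\in B}A$, on which $B$ acts by $x\cdot(\alpha_b)_b=(\alpha_{x^{-1}b})_b$ for $x\in B$; the wreath product $A\wr B$ is the semidirect product $K\rtimes B$ for this action. *)

theory Defs
  imports "HOL-Algebra.Multiplicative_Group" "HOL-Algebra.Elementary_Groups" "HOL-Library.FuncSet" "HOL-Computational_Algebra.Primes"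
begin

definition p_group :: "nat \<Rightarrow> ('a, 'm) monoid_scheme \<Rightarrow> bool" where
  "p_group p G \<longleftrightarrow> group G \<and> finite (carrier G) \<and> (\<exists>n. order G = p ^ n)"

definition max_ord_exp :: "nat \<Rightarrow> ('a, 'm) monoid_scheme \<Rightarrow> nat" where
  "max_ord_exp p G = (THE f. p ^ f = Max (group.ord G ` carrier G))"

definition r_ratio :: "nat \<Rightarrow> ('a, 'm) monoid_scheme \<Rightarrow> int \<Rightarrow> real" where
  "r_ratio p G k =
     real (card {x \<in> carrier G. real (group.ord G x) \<le> real p powi (int (max_ord_exp p G) - k)})
       / real (order G)"

text \<open>Wreath product A wr B = K \<rtimes> B with K = functions B -> A and
  (x . alpha)_b = alpha_(x^-1 b); multiplication (alpha,x)(beta,y) = (alpha (x . beta), x y).\<close>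
definition wreath :: "('a, 'm) monoid_scheme \<Rightarrow> ('b, 'n) monoid_scheme \<Rightarrow> (('b \<Rightarrow> 'a) \<times> 'b) monoid" where
  "wreath A B = \<lparr> carrier = (carrier B \<rightarrow>\<^sub>E carrier A) \<times> carrier B,
     monoid.mult = (\<lambda>(\<alpha>, x) (\<beta>, y).
        ((\<lambda>b\<in>carrier B. \<alpha> b \<otimes>\<^bsub>A\<^esub> \<beta> (inv\<^bsub>B\<^esub> x \<otimes>\<^bsub>B\<^esub> b)), x \<otimes>\<^bsub>B\<^esub> y)),
     monoid.one = ((\<lambda>b\<in>carrier B. \<one>\<^bsub>A\<^esub>), \<one>\<^bsub>B\<^esub>) \<rparr>"

end

theory Submission
  imports Defs
begin

primrec wP :: "('a,'m) monoid_scheme \<Rightarrow> ('b,'n) monoid_scheme \<Rightarrow> ('b \<Rightarrow> 'a) \<Rightarrow> 'b \<Rightarrow> nat \<Rightarrow> 'b \<Rightarrow> 'a" where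
  "wP A B \<alpha> x 0 b = \<one>\<^bsub>A\<^esub>"
| "wP A B \<alpha> x (Suc n) b = wP A B \<alpha> x n b \<otimes>\<^bsub>A\<^esub> \<alpha> (inv\<^bsub>B\<^esub> (x [^]\<^bsub>B\<^esub> n) \<otimes>\<^bsub>B\<^esub> b)"

primrec wQ :: "('a,'m) monoid_scheme \<Rightarrow> ('b,'n) monoid_scheme \<Rightarrow> ('b \<Rightarrow> 'a) \<Rightarrow> 'b \<Rightarrow> nat \<Rightarrow> 'a" where
  "wQ A B \<alpha> x 0 = \<one>\<^bsub>A\<^esub>"
| "wQ A B \<alpha> x (Suc n) = wQ A B \<alpha> x n \<otimes>\<^bsub>A\<^esub> \<alpha> (inv\<^bsub>B\<^esub> (x [^]\<^bsub>B\<^esub> Suc n) \<otimes>\<^bsub>B\<^esub> \<one>\<^bsub>B\<^esub>)"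

locale wr = A: group A + B: group B
  for A :: "('a,'m) monoid_scheme" and B :: "('b,'n) monoid_scheme"
begin

abbreviation W where "W \<equiv> wreath A B"

lemma carrier_W: "carrier W = (carrier B \<rightarrow>\<^sub>E carrier A) \<times> carrier B"
  by (simp add: wreath_def)

lemma mult_W: "(\<alpha>, x) \<otimes>\<^bsub>W\<^esub> (\<beta>, y) =
   ((\<lambda>b\<in>carrier B. \<alpha> b \<otimes>\<^bsub>A\<^esub> \<beta> (inv\<^bsub>B\<^esub> x \<otimes>\<^bsub>B\<^esub> b)), x \<otimes>\<^bsub>B\<^esub> y)"
  by (simp add: wreath_def)

lemma one_W: "\<one>\<^bsub>W\<^esub> = ((\<lambda>b\<in>carrier B. \<one>\<^bsub>A\<^esub>), \<one>\<^bsub>B\<^esub>)"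
  by (simp add: wreath_def)

lemma group_W: "group W"
proof (rule groupI)
  fix g h assume g: "g \<in> carrier W" and h: "h \<in> carrier W"
  obtain \<alpha> x where gx: "g = (\<alpha>, x)" by fastforce
  obtain \<beta> y where hy: "h = (\<beta>, y)" by fastforce
  show "g \<otimes>\<^bsub>W\<^esub> h \<in> carrier W"
    using g h unfolding gx hy carrier_W mult_W by (auto simp: PiE_iff)
next
  show "\<one>\<^bsub>W\<^esub> \<in> carrier W" by (auto simp: carrier_W one_W)
next
  fix g h k assume g: "g \<in> carrier W" and h: "h \<in> carrier W" and k: "k \<in> carrier W"
  obtain \<alpha> x where gx: "g = (\<alpha>, x)" by fastforce
  obtain \<beta> y where hy: "h = (\<beta>, y)" by fastforce
  obtain \<gamma> z where kz: "k = (\<gamma>, z)" by fastforce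
  have x: "x \<in> carrier B" and y: "y \<in> carrier B" and z: "z \<in> carrier B"
    and \<alpha>: "\<alpha> \<in> carrier B \<rightarrow>\<^sub>E carrier A" and \<beta>: "\<beta> \<in> carrier B \<rightarrow>\<^sub>E carrier A"
    and \<gamma>: "\<gamma> \<in> carrier B \<rightarrow>\<^sub>E carrier A"
    using g h k gx hy kz carrier_W by auto
  have e: "\<And>b. b \<in> carrier B \<Longrightarrow> inv\<^bsub>B\<^esub> (x \<otimes>\<^bsub>B\<^esub> y) \<otimes>\<^bsub>B\<^esub> b = inv\<^bsub>B\<^esub> y \<otimes>\<^bsub>B\<^esub> (inv\<^bsub>B\<^esub> x \<otimes>\<^bsub>B\<^esub> b)"
    using x y by (simp add: B.inv_mult_group B.m_assoc)
  show "g \<otimes>\<^bsub>W\<^esub> h \<otimes>\<^bsub>W\<^esub> k = g \<otimes>\<^bsub>W\<^esub> (h \<otimes>\<^bsub>W\<^esub> k)"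
    unfolding gx hy kz mult_W using x y z \<alpha> \<beta> \<gamma>
    by (auto simp: e A.m_assoc B.m_assoc PiE_iff intro!: ext)
next
  fix g assume g: "g \<in> carrier W"
  obtain \<alpha> x where gx: "g = (\<alpha>, x)" by fastforce
  have x: "x \<in> carrier B" and \<alpha>: "\<alpha> \<in> carrier B \<rightarrow>\<^sub>E carrier A" using g gx carrier_W by auto
  show "\<one>\<^bsub>W\<^esub> \<otimes>\<^bsub>W\<^esub> g = g"
    unfolding gx one_W mult_W using x \<alpha>
    by (auto simp: PiE_iff extensional_def intro!: ext)
  show "\<exists>h\<in>carrier W. h \<otimes>\<^bsub>W\<^esub> g = \<one>\<^bsub>W\<^esub>"
  proof (intro bexI)
    show "((\<lambda>b\<in>carrier B. inv\<^bsub>A\<^esub> (\<alpha> (x \<otimes>\<^bsub>B\<^esub> b))), inv\<^bsub>B\<^esub> x) \<otimes>\<^bsub>W\<^esub> g = \<one>\<^bsub>W\<^esub>"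
      unfolding gx one_W mult_W using x \<alpha>
      by (auto simp: PiE_iff B.m_assoc[symmetric] intro!: ext)
    show "((\<lambda>b\<in>carrier B. inv\<^bsub>A\<^esub> (\<alpha> (x \<otimes>\<^bsub>B\<^esub> b))), inv\<^bsub>B\<^esub> x) \<in> carrier W"
      using x \<alpha> by (auto simp: carrier_W PiE_iff)
  qed
qed


sublocale W: group "wreath A B" by (rule group_W)

lemma wP_closed: "\<alpha> \<in> carrier B \<rightarrow>\<^sub>E carrier A \<Longrightarrow> x \<in> carrier B \<Longrightarrow> b \<in> carrier B
   \<Longrightarrow> wP A B \<alpha> x n b \<in> carrier A"
  by (induction n) (auto simp: PiE_iff)

lemma wQ_closed: "\<alpha> \<in> carrier B \<rightarrow>\<^sub>E carrier A \<Longrightarrow> x \<in> carrier B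
   \<Longrightarrow> wQ A B \<alpha> x n \<in> carrier A"
  by (induction n) (auto simp: PiE_iff simp del: nat_pow_Suc)

lemma pow_W: assumes "\<alpha> \<in> carrier B \<rightarrow>\<^sub>E carrier A" "x \<in> carrier B"
  shows "(\<alpha>, x) [^]\<^bsub>W\<^esub> n = ((\<lambda>b\<in>carrier B. wP A B \<alpha> x n b), x [^]\<^bsub>B\<^esub> n)"
proof (induction n)
  case 0
  then show ?case by (simp add: one_W restrict_def)
next
  case (Suc n)
  show ?case
    unfolding nat_pow_Suc Suc mult_W using assms
    by (auto intro!: ext simp del: nat_pow_Suc)
qed

lemma wP_Suc_one: assumes "\<alpha> \<in> carrier B \<rightarrow>\<^sub>E carrier A" "x \<in> carrier B"
  shows "wP A B \<alpha> x (Suc n) \<one>\<^bsub>B\<^esub> = \<alpha> \<one>\<^bsub>B\<^esub> \<otimes>\<^bsub>A\<^esub> wQ A B \<alpha> x n"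
proof (induction n)
  case 0
  then show ?case using assms by (auto simp: PiE_iff)
next
  case (Suc n)
  have "wP A B \<alpha> x (Suc (Suc n)) \<one>\<^bsub>B\<^esub> = wP A B \<alpha> x (Suc n) \<one>\<^bsub>B\<^esub> \<otimes>\<^bsub>A\<^esub> \<alpha> (inv\<^bsub>B\<^esub> (x [^]\<^bsub>B\<^esub> Suc n) \<otimes>\<^bsub>B\<^esub> \<one>\<^bsub>B\<^esub>)"
    by (simp only: wP.simps(2))
  also have "\<dots> = \<alpha> \<one>\<^bsub>B\<^esub> \<otimes>\<^bsub>A\<^esub> wQ A B \<alpha> x (Suc n)"
    unfolding Suc wQ.simps(2) using assms wQ_closed[OF assms]
    by (subst A.m_assoc) (auto simp: PiE_iff simp del: nat_pow_Suc)
  finally show ?case .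
qed

lemma wQ_upd: assumes "\<And>j. 1 \<le> j \<Longrightarrow> j \<le> n \<Longrightarrow> x [^]\<^bsub>B\<^esub> j \<noteq> \<one>\<^bsub>B\<^esub>" "x \<in> carrier B"
  shows "wQ A B (\<alpha>(\<one>\<^bsub>B\<^esub> := c)) x n = wQ A B \<alpha> x n"
  using assms(1)
proof (induction n)
  case 0
  then show ?case by simp
next
  case (Suc n)
  have "inv\<^bsub>B\<^esub> (x [^]\<^bsub>B\<^esub> Suc n) \<noteq> \<one>\<^bsub>B\<^esub>"
  proof
    assume h: "inv\<^bsub>B\<^esub> (x [^]\<^bsub>B\<^esub> Suc n) = \<one>\<^bsub>B\<^esub>"
    have "x [^]\<^bsub>B\<^esub> Suc n = inv\<^bsub>B\<^esub> (inv\<^bsub>B\<^esub> (x [^]\<^bsub>B\<^esub> Suc n))"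
      using B.inv_inv[of "x [^]\<^bsub>B\<^esub> Suc n"] B.nat_pow_closed[of x "Suc n"] assms(2) by simp
    also have "\<dots> = \<one>\<^bsub>B\<^esub>" by (simp only: h B.inv_one)
    finally show False using Suc.prems[of "Suc n"] by simp
  qed
  then show ?case using Suc assms(2) by (simp del: nat_pow_Suc)
qed

end

lemma pp_dvd: "prime (p::nat) \<Longrightarrow> p ^ i \<le> p ^ j \<Longrightarrow> p ^ i dvd p ^ j"
  by (meson le_imp_power_dvd power_le_imp_le_exp prime_gt_1_nat)

lemma (in group) canc1: "u \<in> carrier G \<Longrightarrow> z \<in> carrier G \<Longrightarrow> u \<otimes> (inv u \<otimes> z) = z"
  by (simp add: m_assoc[symmetric])

lemma (in group) canc2: "u \<in> carrier G \<Longrightarrow> z \<in> carrier G \<Longrightarrow> inv u \<otimes> (u \<otimes> z) = z"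
  by (simp add: m_assoc[symmetric])

lemma (in group) conj_pow: "u \<in> carrier G \<Longrightarrow> a \<in> carrier G \<Longrightarrow>
   (inv u \<otimes> a \<otimes> u) [^] (n::nat) = inv u \<otimes> a [^] n \<otimes> u"
proof (induction n)
  case 0
  then show ?case by simp
next
  case (Suc n)
  have "(inv u \<otimes> a \<otimes> u) [^] Suc n = (inv u \<otimes> a [^] n \<otimes> u) \<otimes> (inv u \<otimes> a \<otimes> u)"
    using Suc by simp
  also have "\<dots> = inv u \<otimes> (a [^] n \<otimes> a) \<otimes> u"
    using Suc.prems by (simp add: m_assoc canc1)
  finally show ?case by simp
qed

lemma (in group) conj_ord: "u \<in> carrier G \<Longrightarrow> a \<in> carrier G \<Longrightarrow>
   ord (inv u \<otimes> a \<otimes> u) = ord a"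
proof -
  assume u: "u \<in> carrier G" and a: "a \<in> carrier G"
  have "(inv u \<otimes> a \<otimes> u) [^] n = \<one> \<longleftrightarrow> a [^] n = \<one>" for n :: nat
  proof
    assume "(inv u \<otimes> a \<otimes> u) [^] n = \<one>"
    then have h: "inv u \<otimes> a [^] n \<otimes> u = \<one>" using conj_pow u a by simp
    have "a [^] n = u \<otimes> (inv u \<otimes> a [^] n \<otimes> u) \<otimes> inv u"
      using u a by (simp add: m_assoc canc1)
    then show "a [^] n = \<one>" using h u by simp
  next
    assume "a [^] n = \<one>"
    then show "(inv u \<otimes> a \<otimes> u) [^] n = \<one>" using conj_pow u a by simp
  qed
  then show ?thesis using u a by (simp add: ord_unique pow_eq_id)
qed

locale wrp = wr +
  fixes p :: nat
  assumes prime_p: "prime p" and ordB: "order B = p" and finA: "finite (carrier A)"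
    and ordA: "\<exists>N. order A = p ^ N"
begin

lemma p_gt1: "p > 1" using prime_p prime_gt_1_nat by blast

lemma finB: "finite (carrier B)"
  using ordB p_gt1 B.order_gt_0_iff_finite by simp

lemma cardB: "card (carrier B) = p" using ordB by (simp add: order_def)

lemma finW: "finite (carrier W)"
  using finA finB by (simp add: carrier_W finite_PiE)

lemma B_ord: "x \<in> carrier B \<Longrightarrow> x \<noteq> \<one>\<^bsub>B\<^esub> \<Longrightarrow> B.ord x = p"
  using B.ord_dvd_group_order[of x] ordB prime_p B.ord_eq_1[of x]
  by (metis prime_nat_iff)

lemma B_pow_ne: "x \<in> carrier B \<Longrightarrow> x \<noteq> \<one>\<^bsub>B\<^esub> \<Longrightarrow> 0 < j \<Longrightarrow> j < p \<Longrightarrow> x [^]\<^bsub>B\<^esub> j \<noteq> \<one>\<^bsub>B\<^esub>"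
  using B.pow_eq_id[of x j] B_ord by (auto dest: dvd_imp_le)

lemma B_surj: assumes x: "x \<in> carrier B" "x \<noteq> \<one>\<^bsub>B\<^esub>" and b: "b \<in> carrier B"
  shows "\<exists>i::nat. b = inv\<^bsub>B\<^esub> (x [^]\<^bsub>B\<^esub> i)"
proof -
  have inj: "inj_on (\<lambda>i. x [^]\<^bsub>B\<^esub> i) {0 .. B.ord x - 1}"
    using B.ord_inj x by blast
  have "card ((\<lambda>i. x [^]\<^bsub>B\<^esub> i) ` {0 .. B.ord x - 1}) = p"
    using card_image[OF inj] B_ord[OF x] p_gt1 by simp
  moreover have "(\<lambda>i. x [^]\<^bsub>B\<^esub> i) ` {0 .. B.ord x - 1} \<subseteq> carrier B" using x by auto
  ultimately have eq: "(\<lambda>i. x [^]\<^bsub>B\<^esub> i) ` {0 .. B.ord x - 1} = carrier B"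
    using card_subset_eq[OF finB] cardB by metis
  have "inv\<^bsub>B\<^esub> b \<in> carrier B" using b by simp
  then have "inv\<^bsub>B\<^esub> b \<in> (\<lambda>i. x [^]\<^bsub>B\<^esub> i) ` {0 .. B.ord x - 1}" using eq by simp
  then obtain i :: nat where "inv\<^bsub>B\<^esub> b = x [^]\<^bsub>B\<^esub> i" by blast
  then have "b = inv\<^bsub>B\<^esub> (x [^]\<^bsub>B\<^esub> i)" using b by (metis B.inv_inv)
  then show ?thesis by blast
qed

lemma A_ord_pow: "a \<in> carrier A \<Longrightarrow> \<exists>i. A.ord a = p ^ i"
  using A.ord_dvd_group_order[of a] ordA divides_primepow_nat[OF prime_p] by metis

lemma A_ord_pos: "a \<in> carrier A \<Longrightarrow> A.ord a > 0"
  using A.ord_ge_1[OF finA] by fastforce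


lemma wP_one: "\<beta> \<in> carrier B \<rightarrow>\<^sub>E carrier A \<Longrightarrow> b \<in> carrier B \<Longrightarrow>
   wP A B \<beta> \<one>\<^bsub>B\<^esub> n b = \<beta> b [^]\<^bsub>A\<^esub> n"
  by (induction n) (auto simp: PiE_iff)

lemma Max_pp_dvd: assumes "finite S" "s \<in> S" "\<And>t. t \<in> S \<Longrightarrow> \<exists>i. t = p ^ i"
  shows "s dvd Max S"
proof -
  obtain i where i: "s = p ^ i" using assms by blast
  obtain j where j: "Max S = p ^ j" using assms Max_in[of S] by blast
  show ?thesis using Max_ge[OF assms(1,2)] pp_dvd[OF prime_p] i j by simp
qed

lemma ord_W_one: assumes \<beta>: "\<beta> \<in> carrier B \<rightarrow>\<^sub>E carrier A"
  shows "W.ord (\<beta>, \<one>\<^bsub>B\<^esub>) = Max ((\<lambda>b. A.ord (\<beta> b)) ` carrier B)"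
proof -
  define S where "S = (\<lambda>b. A.ord (\<beta> b)) ` carrier B"
  have finS: "finite S" using finB S_def by simp
  have S_pp: "\<And>t. t \<in> S \<Longrightarrow> \<exists>i. t = p ^ i" using A_ord_pow \<beta> S_def by (auto simp: PiE_iff)
  have MS: "Max S \<in> S" using finS S_def by (intro Max_in) auto
  have g: "(\<beta>, \<one>\<^bsub>B\<^esub>) \<in> carrier W" using \<beta> by (simp add: carrier_W)
  have key: "(\<beta>, \<one>\<^bsub>B\<^esub>) [^]\<^bsub>W\<^esub> n = \<one>\<^bsub>W\<^esub> \<longleftrightarrow> Max S dvd n" for n :: nat
  proof -
    have "(\<beta>, \<one>\<^bsub>B\<^esub>) [^]\<^bsub>W\<^esub> n = ((\<lambda>b\<in>carrier B. \<beta> b [^]\<^bsub>A\<^esub> n), \<one>\<^bsub>B\<^esub>)"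
      using pow_W[OF \<beta>, of "\<one>\<^bsub>B\<^esub>" n] wP_one[OF \<beta>] by (auto intro!: ext)
    then have "(\<beta>, \<one>\<^bsub>B\<^esub>) [^]\<^bsub>W\<^esub> n = \<one>\<^bsub>W\<^esub> \<longleftrightarrow> (\<forall>b\<in>carrier B. \<beta> b [^]\<^bsub>A\<^esub> n = \<one>\<^bsub>A\<^esub>)"
      unfolding one_W by (auto simp: fun_eq_iff restrict_def split: if_splits)
    also have "\<dots> \<longleftrightarrow> (\<forall>b\<in>carrier B. A.ord (\<beta> b) dvd n)"
      using \<beta> A.pow_eq_id by (auto simp: PiE_iff)
    also have "\<dots> \<longleftrightarrow> Max S dvd n"
    proof
      assume "\<forall>b\<in>carrier B. A.ord (\<beta> b) dvd n"
      then show "Max S dvd n" using MS S_def by auto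
    next
      assume "Max S dvd n"
      then show "\<forall>b\<in>carrier B. A.ord (\<beta> b) dvd n"
        using Max_pp_dvd[OF finS _ S_pp] S_def dvd_trans by blast
    qed
    finally show ?thesis .
  qed
  show ?thesis using W.ord_unique[OF g] key S_def by blast
qed


lemma ord_W_gen: assumes \<alpha>: "\<alpha> \<in> carrier B \<rightarrow>\<^sub>E carrier A" and x: "x \<in> carrier B" "x \<noteq> \<one>\<^bsub>B\<^esub>"
  shows "W.ord (\<alpha>, x) = p * A.ord (wP A B \<alpha> x p \<one>\<^bsub>B\<^esub>)"
proof -
  define \<beta> where "\<beta> = (\<lambda>b\<in>carrier B. wP A B \<alpha> x p b)"
  have \<beta>: "\<beta> \<in> carrier B \<rightarrow>\<^sub>E carrier A" using wP_closed[OF \<alpha> x(1)] \<beta>_def by auto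
  have g: "(\<alpha>, x) \<in> carrier W" using \<alpha> x by (simp add: carrier_W)
  have xp: "x [^]\<^bsub>B\<^esub> p = \<one>\<^bsub>B\<^esub>" using B.pow_ord_eq_1[OF x(1)] B_ord[OF x] by simp
  have gp: "(\<alpha>, x) [^]\<^bsub>W\<^esub> p = (\<beta>, \<one>\<^bsub>B\<^esub>)"
    using pow_W[OF \<alpha> x(1), of p] xp \<beta>_def by simp
  have comm: "(\<beta>, \<one>\<^bsub>B\<^esub>) \<otimes>\<^bsub>W\<^esub> (\<alpha>, x) = (\<alpha>, x) \<otimes>\<^bsub>W\<^esub> (\<beta>, \<one>\<^bsub>B\<^esub>)"
    using W.nat_pow_Suc2[OF g, of p] W.nat_pow_Suc[of "(\<alpha>, x)" p] gp by metis
  have conj: "A.ord (\<beta> (inv\<^bsub>B\<^esub> x \<otimes>\<^bsub>B\<^esub> b)) = A.ord (\<beta> b)" if b: "b \<in> carrier B" for b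
  proof -
    have "fst ((\<beta>, \<one>\<^bsub>B\<^esub>) \<otimes>\<^bsub>W\<^esub> (\<alpha>, x)) b = fst ((\<alpha>, x) \<otimes>\<^bsub>W\<^esub> (\<beta>, \<one>\<^bsub>B\<^esub>)) b"
      using comm by simp
    then have "\<beta> b \<otimes>\<^bsub>A\<^esub> \<alpha> b = \<alpha> b \<otimes>\<^bsub>A\<^esub> \<beta> (inv\<^bsub>B\<^esub> x \<otimes>\<^bsub>B\<^esub> b)"
      unfolding mult_W using b x by simp
    moreover have ab: "\<alpha> b \<in> carrier A" "\<beta> b \<in> carrier A" "\<beta> (inv\<^bsub>B\<^esub> x \<otimes>\<^bsub>B\<^esub> b) \<in> carrier A"
      using b x \<alpha> \<beta> by (auto simp: PiE_iff)
    ultimately have "inv\<^bsub>A\<^esub> (\<alpha> b) \<otimes>\<^bsub>A\<^esub> \<beta> b \<otimes>\<^bsub>A\<^esub> \<alpha> b = \<beta> (inv\<^bsub>B\<^esub> x \<otimes>\<^bsub>B\<^esub> b)"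
      by (simp add: A.m_assoc A.canc2)
    then have "\<beta> (inv\<^bsub>B\<^esub> x \<otimes>\<^bsub>B\<^esub> b) = inv\<^bsub>A\<^esub> (\<alpha> b) \<otimes>\<^bsub>A\<^esub> \<beta> b \<otimes>\<^bsub>A\<^esub> \<alpha> b" by simp
    then show ?thesis using A.conj_ord[of "\<alpha> b" "\<beta> b"] ab by simp
  qed
  have all_i: "A.ord (\<beta> (inv\<^bsub>B\<^esub> (x [^]\<^bsub>B\<^esub> i))) = A.ord (\<beta> \<one>\<^bsub>B\<^esub>)" for i :: nat
  proof (induction i)
    case 0
    then show ?case by simp
  next
    case (Suc i)
    have "inv\<^bsub>B\<^esub> (x [^]\<^bsub>B\<^esub> Suc i) = inv\<^bsub>B\<^esub> x \<otimes>\<^bsub>B\<^esub> inv\<^bsub>B\<^esub> (x [^]\<^bsub>B\<^esub> i)"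
      using x(1) by (simp add: B.inv_mult_group)
    then show ?case using conj[of "inv\<^bsub>B\<^esub> (x [^]\<^bsub>B\<^esub> i)"] Suc x(1) by (simp del: nat_pow_Suc)
  qed
  have all_b: "A.ord (\<beta> b) = A.ord (\<beta> \<one>\<^bsub>B\<^esub>)" if "b \<in> carrier B" for b
    using B_surj[OF x that] all_i by blast
  have "(\<lambda>b. A.ord (\<beta> b)) ` carrier B = {A.ord (\<beta> \<one>\<^bsub>B\<^esub>)}"
  proof (intro equalityI subsetI)
    fix t assume "t \<in> (\<lambda>b. A.ord (\<beta> b)) ` carrier B"
    then obtain b where b: "b \<in> carrier B" "t = A.ord (\<beta> b)" by blast
    then show "t \<in> {A.ord (\<beta> \<one>\<^bsub>B\<^esub>)}" using all_b[OF b(1)] by simp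
  next
    fix t assume "t \<in> {A.ord (\<beta> \<one>\<^bsub>B\<^esub>)}"
    then show "t \<in> (\<lambda>b. A.ord (\<beta> b)) ` carrier B" using B.one_closed by blast
  qed
  then have o1: "W.ord ((\<alpha>, x) [^]\<^bsub>W\<^esub> p) = A.ord (wP A B \<alpha> x p \<one>\<^bsub>B\<^esub>)"
    using ord_W_one[OF \<beta>] gp \<beta>_def by simp
  have "(\<alpha>, x) [^]\<^bsub>W\<^esub> W.ord (\<alpha>, x) = \<one>\<^bsub>W\<^esub>" using W.pow_ord_eq_1[OF g] .
  then have "x [^]\<^bsub>B\<^esub> W.ord (\<alpha>, x) = \<one>\<^bsub>B\<^esub>"
    using pow_W[OF \<alpha> x(1)] by (simp add: one_W)
  then have dv: "p dvd W.ord (\<alpha>, x)" using B.pow_eq_id[OF x(1)] B_ord[OF x] by simp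
  have "W.ord ((\<alpha>, x) [^]\<^bsub>W\<^esub> p) = W.ord (\<alpha>, x) div p"
    using W.ord_pow[OF g dv] p_gt1 by simp
  then show ?thesis using o1 dv by simp
qed


lemma THE_pow: "Max S = p ^ j \<Longrightarrow> (THE f. p ^ f = Max S) = j"
  by (rule the_equality) (use p_gt1 in auto)

lemma maxA: "Max (A.ord ` carrier A) = p ^ max_ord_exp p A"
proof -
  have "Max (A.ord ` carrier A) \<in> A.ord ` carrier A"
    using finA by (intro Max_in) auto
  then obtain a where a: "a \<in> carrier A" "Max (A.ord ` carrier A) = A.ord a" by blast
  then obtain i where i: "Max (A.ord ` carrier A) = p ^ i" using A_ord_pow by metis
  then show ?thesis unfolding max_ord_exp_def using THE_pow[OF i] by simp
qed

lemma A_ord_le: "a \<in> carrier A \<Longrightarrow> A.ord a \<le> p ^ max_ord_exp p A"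
  using maxA finA by (metis Max_ge finite_imageI imageI)

lemma A_ord_wit: "\<exists>a\<in>carrier A. A.ord a = p ^ max_ord_exp p A"
proof -
  have "Max (A.ord ` carrier A) \<in> A.ord ` carrier A"
    using finA by (intro Max_in) auto
  then show ?thesis using maxA by auto
qed

lemma wQ_triv: "x \<in> carrier B \<Longrightarrow> wQ A B (\<lambda>b\<in>carrier B. \<one>\<^bsub>A\<^esub>) x n = \<one>\<^bsub>A\<^esub>"
  by (induction n) (simp_all del: nat_pow_Suc)

lemma W_ord_le: assumes g: "g \<in> carrier W" shows "W.ord g \<le> p ^ Suc (max_ord_exp p A)"
proof -
  obtain \<alpha> x where gx: "g = (\<alpha>, x)" by fastforce
  have \<alpha>: "\<alpha> \<in> carrier B \<rightarrow>\<^sub>E carrier A" and x: "x \<in> carrier B" using g gx carrier_W by auto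
  show ?thesis
  proof (cases "x = \<one>\<^bsub>B\<^esub>")
    case True
    have "Max ((\<lambda>b. A.ord (\<alpha> b)) ` carrier B) \<in> (\<lambda>b. A.ord (\<alpha> b)) ` carrier B"
      using finB by (intro Max_in) auto
    then obtain b where "b \<in> carrier B" "Max ((\<lambda>b. A.ord (\<alpha> b)) ` carrier B) = A.ord (\<alpha> b)" by auto
    then have "W.ord g \<le> p ^ max_ord_exp p A"
      using ord_W_one[OF \<alpha>] gx True A_ord_le \<alpha> by (auto simp: PiE_iff)
    also have "\<dots> \<le> p ^ Suc (max_ord_exp p A)" using p_gt1 by simp
    finally show ?thesis .
  next
    case False
    have "W.ord g = p * A.ord (wP A B \<alpha> x p \<one>\<^bsub>B\<^esub>)" using ord_W_gen[OF \<alpha> x False] gx by simp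
    also have "\<dots> \<le> p * p ^ max_ord_exp p A"
      using A_ord_le[OF wP_closed[OF \<alpha> x B.one_closed]] by simp
    finally show ?thesis by simp
  qed
qed

lemma B_nontriv: "\<exists>x\<in>carrier B. x \<noteq> \<one>\<^bsub>B\<^esub>"
proof (rule ccontr)
  assume "\<not> ?thesis"
  then have "carrier B \<subseteq> {\<one>\<^bsub>B\<^esub>}" by auto
  then have "card (carrier B) \<le> 1" by (metis card.empty card_insert_if card_mono finite.emptyI finite_insert empty_iff le_refl insert_absorb order_refl One_nat_def card_le_Suc0_iff_eq)
  then show False using cardB p_gt1 by simp
qed

lemma W_ord_wit: "\<exists>g\<in>carrier W. W.ord g = p ^ Suc (max_ord_exp p A)"
proof -
  obtain a0 where a0: "a0 \<in> carrier A" "A.ord a0 = p ^ max_ord_exp p A" using A_ord_wit by blast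
  obtain x where x: "x \<in> carrier B" "x \<noteq> \<one>\<^bsub>B\<^esub>" using B_nontriv by blast
  define \<alpha> where "\<alpha> = (\<lambda>b\<in>carrier B. \<one>\<^bsub>A\<^esub>)(\<one>\<^bsub>B\<^esub> := a0)"
  have \<alpha>: "\<alpha> \<in> carrier B \<rightarrow>\<^sub>E carrier A" using a0 unfolding \<alpha>_def by (auto simp: PiE_iff extensional_def)
  have ne: "\<And>j. 1 \<le> j \<Longrightarrow> j \<le> p - 1 \<Longrightarrow> x [^]\<^bsub>B\<^esub> j \<noteq> \<one>\<^bsub>B\<^esub>"
    using B_pow_ne[OF x] p_gt1 by auto
  have q: "wQ A B \<alpha> x (p - 1) = \<one>\<^bsub>A\<^esub>"
    unfolding \<alpha>_def using wQ_upd[OF ne x(1)] wQ_triv[OF x(1)] by simp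
  have "wP A B \<alpha> x p \<one>\<^bsub>B\<^esub> = wP A B \<alpha> x (Suc (p - 1)) \<one>\<^bsub>B\<^esub>" using p_gt1 by simp
  also have "\<dots> = a0" using wP_Suc_one[OF \<alpha> x(1)] q a0 by (simp add: \<alpha>_def)
  finally have "W.ord (\<alpha>, x) = p ^ Suc (max_ord_exp p A)" using ord_W_gen[OF \<alpha> x] a0 by simp
  moreover have "(\<alpha>, x) \<in> carrier W" using \<alpha> x by (simp add: carrier_W)
  ultimately show ?thesis by blast
qed

lemma max_exp_W: "max_ord_exp p W = Suc (max_ord_exp p A)"
proof -
  have "Max (W.ord ` carrier W) = p ^ Suc (max_ord_exp p A)"
  proof (rule Max_eqI)
    obtain g where g: "g \<in> carrier W" "W.ord g = p ^ Suc (max_ord_exp p A)" using W_ord_wit by blast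
    then show "p ^ Suc (max_ord_exp p A) \<in> W.ord ` carrier W" by (metis imageI)
  qed (use W_ord_le finW in auto)
  then show ?thesis using THE_pow[of "W.ord ` carrier W"] by (simp only: max_ord_exp_def)
qed


lemma card_fib: fixes T :: real
  shows "card {g \<in> carrier W. P g} = (\<Sum>x\<in>carrier B. card {\<alpha> \<in> carrier B \<rightarrow>\<^sub>E carrier A. P (\<alpha>, x)})"
proof -
  have eq: "{g \<in> carrier W. P g} = (\<lambda>(x, \<alpha>). (\<alpha>, x)) ` (SIGMA x:carrier B. {\<alpha> \<in> carrier B \<rightarrow>\<^sub>E carrier A. P (\<alpha>, x)})"
    by (auto simp: carrier_W image_iff)
  have "card {g \<in> carrier W. P g} = card (SIGMA x:carrier B. {\<alpha> \<in> carrier B \<rightarrow>\<^sub>E carrier A. P (\<alpha>, x)})"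
    unfolding eq by (rule card_image) (auto simp: inj_on_def)
  then show ?thesis
    using finB finA by (subst (asm) card_SigmaI) (auto simp: finite_PiE)
qed

lemma card_F1: fixes T :: real
  shows "card {\<alpha> \<in> carrier B \<rightarrow>\<^sub>E carrier A. real (W.ord (\<alpha>, \<one>\<^bsub>B\<^esub>)) \<le> T}
     = card {a \<in> carrier A. real (A.ord a) \<le> T} ^ p"
proof -
  have eq: "{\<alpha> \<in> carrier B \<rightarrow>\<^sub>E carrier A. real (W.ord (\<alpha>, \<one>\<^bsub>B\<^esub>)) \<le> T}
      = carrier B \<rightarrow>\<^sub>E {a \<in> carrier A. real (A.ord a) \<le> T}"
  proof (intro equalityI subsetI)
    fix \<alpha> assume a: "\<alpha> \<in> {\<alpha> \<in> carrier B \<rightarrow>\<^sub>E carrier A. real (W.ord (\<alpha>, \<one>\<^bsub>B\<^esub>)) \<le> T}"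
    then have \<alpha>: "\<alpha> \<in> carrier B \<rightarrow>\<^sub>E carrier A" and le: "real (Max ((\<lambda>b. A.ord (\<alpha> b)) ` carrier B)) \<le> T"
      using ord_W_one by auto
    have "real (A.ord (\<alpha> b)) \<le> T" if "b \<in> carrier B" for b
    proof -
      have "A.ord (\<alpha> b) \<le> Max ((\<lambda>b. A.ord (\<alpha> b)) ` carrier B)" using finB that by simp
      then show ?thesis using le by linarith
    qed
    then show "\<alpha> \<in> carrier B \<rightarrow>\<^sub>E {a \<in> carrier A. real (A.ord a) \<le> T}" using \<alpha> by (auto simp: PiE_iff)
  next
    fix \<alpha> assume a: "\<alpha> \<in> carrier B \<rightarrow>\<^sub>E {a \<in> carrier A. real (A.ord a) \<le> T}"
    then have \<alpha>: "\<alpha> \<in> carrier B \<rightarrow>\<^sub>E carrier A" by (auto simp: PiE_iff)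
    have "Max ((\<lambda>b. A.ord (\<alpha> b)) ` carrier B) \<in> (\<lambda>b. A.ord (\<alpha> b)) ` carrier B"
      using finB by (intro Max_in) auto
    then obtain b where "b \<in> carrier B" "Max ((\<lambda>b. A.ord (\<alpha> b)) ` carrier B) = A.ord (\<alpha> b)" by auto
    then have "real (W.ord (\<alpha>, \<one>\<^bsub>B\<^esub>)) \<le> T" using ord_W_one[OF \<alpha>] a by (auto simp: PiE_iff)
    then show "\<alpha> \<in> {\<alpha> \<in> carrier B \<rightarrow>\<^sub>E carrier A. real (W.ord (\<alpha>, \<one>\<^bsub>B\<^esub>)) \<le> T}" using \<alpha> by simp
  qed
  show ?thesis unfolding eq using finB cardB by (simp add: card_PiE)
qed


lemma card_Fx: fixes T :: real
  assumes x: "x \<in> carrier B" "x \<noteq> \<one>\<^bsub>B\<^esub>"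
  shows "card {\<alpha> \<in> carrier B \<rightarrow>\<^sub>E carrier A. real (W.ord (\<alpha>, x)) \<le> real p * T}
     = card (carrier A) ^ (p - 1) * card {a \<in> carrier A. real (A.ord a) \<le> T}"
proof -
  define G where "G = {a \<in> carrier A. real (A.ord a) \<le> T}"
  define q where "q = (\<lambda>\<alpha>. wQ A B \<alpha> x (p - 1))"
  define \<phi> where "\<phi> = (\<lambda>\<alpha>. \<alpha>(\<one>\<^bsub>B\<^esub> := \<alpha> \<one>\<^bsub>B\<^esub> \<otimes>\<^bsub>A\<^esub> q \<alpha>))"
  define \<psi> where "\<psi> = (\<lambda>\<alpha>. \<alpha>(\<one>\<^bsub>B\<^esub> := \<alpha> \<one>\<^bsub>B\<^esub> \<otimes>\<^bsub>A\<^esub> inv\<^bsub>A\<^esub> q \<alpha>))"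
  define F where "F = {\<alpha> \<in> carrier B \<rightarrow>\<^sub>E carrier A. real (W.ord (\<alpha>, x)) \<le> real p * T}"
  define H where "H = PiE (carrier B) (\<lambda>b. if b = \<one>\<^bsub>B\<^esub> then G else carrier A)"
  have ne: "\<And>j. 1 \<le> j \<Longrightarrow> j \<le> p - 1 \<Longrightarrow> x [^]\<^bsub>B\<^esub> j \<noteq> \<one>\<^bsub>B\<^esub>"
    using B_pow_ne[OF x] p_gt1 by auto
  have HsubP: "H \<subseteq> carrier B \<rightarrow>\<^sub>E carrier A" unfolding H_def G_def by (rule PiE_mono) auto
  have qupd: "q (\<alpha>(\<one>\<^bsub>B\<^esub> := c)) = q \<alpha>" for \<alpha> c
    unfolding q_def using wQ_upd[OF ne x(1)] by simp
  have qc: "\<alpha> \<in> carrier B \<rightarrow>\<^sub>E carrier A \<Longrightarrow> q \<alpha> \<in> carrier A" for \<alpha>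
    unfolding q_def using wQ_closed x(1) by blast
  have wPq: "\<alpha> \<in> carrier B \<rightarrow>\<^sub>E carrier A \<Longrightarrow> wP A B \<alpha> x p \<one>\<^bsub>B\<^esub> = \<alpha> \<one>\<^bsub>B\<^esub> \<otimes>\<^bsub>A\<^esub> q \<alpha>" for \<alpha>
    using wP_Suc_one[OF _ x(1), of \<alpha> "p - 1"] p_gt1 unfolding q_def by simp
  have a1: "\<alpha> \<in> carrier B \<rightarrow>\<^sub>E carrier A \<Longrightarrow> \<alpha> \<one>\<^bsub>B\<^esub> \<in> carrier A" for \<alpha>
    by (auto simp: PiE_iff)
  have upd_PiE: "\<alpha> \<in> carrier B \<rightarrow>\<^sub>E carrier A \<Longrightarrow> c \<in> carrier A \<Longrightarrow> \<alpha>(\<one>\<^bsub>B\<^esub> := c) \<in> carrier B \<rightarrow>\<^sub>E carrier A" for \<alpha> c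
    by (auto simp: PiE_iff extensional_def)
  have F_eq: "F = {\<alpha> \<in> carrier B \<rightarrow>\<^sub>E carrier A. real (A.ord (\<phi> \<alpha> \<one>\<^bsub>B\<^esub>)) \<le> T}"
  proof -
    have "real (W.ord (\<alpha>, x)) \<le> real p * T \<longleftrightarrow> real (A.ord (\<phi> \<alpha> \<one>\<^bsub>B\<^esub>)) \<le> T"
      if "\<alpha> \<in> carrier B \<rightarrow>\<^sub>E carrier A" for \<alpha>
      using ord_W_gen[OF that x] wPq[OF that] p_gt1 by (simp add: \<phi>_def)
    then show ?thesis unfolding F_def by blast
  qed
  have bij: "bij_betw \<phi> F H"
  proof (rule bij_betw_byWitness[where f'=\<psi>])
    show "\<forall>a\<in>F. \<psi> (\<phi> a) = a"
    proof
      fix \<alpha> assume "\<alpha> \<in> F"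
      then have \<alpha>: "\<alpha> \<in> carrier B \<rightarrow>\<^sub>E carrier A" by (simp add: F_def)
      show "\<psi> (\<phi> \<alpha>) = \<alpha>"
        unfolding \<psi>_def \<phi>_def using qupd a1[OF \<alpha>] qc[OF \<alpha>] by (simp add: A.m_assoc)
    qed
    show "\<forall>a\<in>H. \<phi> (\<psi> a) = a"
    proof
      fix \<alpha> assume "\<alpha> \<in> H"
      then have \<alpha>: "\<alpha> \<in> carrier B \<rightarrow>\<^sub>E carrier A" using HsubP by blast
      show "\<phi> (\<psi> \<alpha>) = \<alpha>"
        unfolding \<psi>_def \<phi>_def using qupd a1[OF \<alpha>] qc[OF \<alpha>] by (simp add: A.m_assoc)
    qed
    show "\<phi> ` F \<subseteq> H"
    proof
      fix \<beta> assume "\<beta> \<in> \<phi> ` F"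
      then obtain \<alpha> where \<alpha>F: "\<alpha> \<in> F" and b: "\<beta> = \<phi> \<alpha>" by blast
      have \<alpha>: "\<alpha> \<in> carrier B \<rightarrow>\<^sub>E carrier A" using \<alpha>F by (simp add: F_def)
      have "\<phi> \<alpha> \<in> carrier B \<rightarrow>\<^sub>E carrier A" unfolding \<phi>_def using upd_PiE[OF \<alpha>] a1[OF \<alpha>] qc[OF \<alpha>] by simp
      moreover have "real (A.ord (\<phi> \<alpha> \<one>\<^bsub>B\<^esub>)) \<le> T" using \<alpha>F F_eq by simp
      ultimately show "\<beta> \<in> H" unfolding b H_def G_def by (auto simp: PiE_iff)
    qed
    show "\<psi> ` H \<subseteq> F"
    proof
      fix \<alpha> assume "\<alpha> \<in> \<psi> ` H"
      then obtain \<beta> where \<beta>H: "\<beta> \<in> H" and b: "\<alpha> = \<psi> \<beta>" by blast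
      have \<beta>: "\<beta> \<in> carrier B \<rightarrow>\<^sub>E carrier A" using \<beta>H HsubP by blast
      have "\<beta> \<one>\<^bsub>B\<^esub> \<in> G" using \<beta>H B.one_closed unfolding H_def PiE_iff by metis
      then have T1: "real (A.ord (\<beta> \<one>\<^bsub>B\<^esub>)) \<le> T" by (simp add: G_def)
      have \<psi>\<beta>: "\<psi> \<beta> \<in> carrier B \<rightarrow>\<^sub>E carrier A" unfolding \<psi>_def using upd_PiE[OF \<beta>] a1[OF \<beta>] qc[OF \<beta>] by simp
      have "\<phi> (\<psi> \<beta>) = \<beta>"
        unfolding \<psi>_def \<phi>_def using qupd a1[OF \<beta>] qc[OF \<beta>] by (simp add: A.m_assoc)
      then show "\<alpha> \<in> F" unfolding b F_eq using \<psi>\<beta> T1 by simp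
    qed
  qed
  have "card F = card H" using bij_betw_same_card[OF bij] .
  also have "card H = (\<Prod>b\<in>carrier B. card (if b = \<one>\<^bsub>B\<^esub> then G else carrier A))"
    unfolding H_def using finB by (simp add: card_PiE)
  also have "\<dots> = card G * (\<Prod>b\<in>carrier B - {\<one>\<^bsub>B\<^esub>}. card (if b = \<one>\<^bsub>B\<^esub> then G else carrier A))"
    using finB by (subst prod.remove[of _ "\<one>\<^bsub>B\<^esub>"]) auto
  also have "(\<Prod>b\<in>carrier B - {\<one>\<^bsub>B\<^esub>}. card (if b = \<one>\<^bsub>B\<^esub> then G else carrier A)) = card (carrier A) ^ (p - 1)"
    using finB cardB by simp
  finally show ?thesis unfolding F_def G_def by simp
qed


lemma count_W: fixes k :: int
  shows "card {g \<in> carrier W. real (W.ord g) \<le> real p powi (int (max_ord_exp p W) - k)}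
    = card {a \<in> carrier A. real (A.ord a) \<le> real p powi (int (max_ord_exp p A) - (k - 1))} ^ p
      + (p - 1) * (card (carrier A) ^ (p - 1) * card {a \<in> carrier A. real (A.ord a) \<le> real p powi (int (max_ord_exp p A) - k)})"
proof -
  define f where "f = max_ord_exp p A"
  define T where "T = real p powi (int (max_ord_exp p W) - k)"
  define c where "c = card (carrier A) ^ (p - 1) * card {a \<in> carrier A. real (A.ord a) \<le> real p powi (int f - k)}"
  have T1: "T = real p powi (int f - (k - 1))"
    unfolding T_def max_exp_W f_def by (simp add: algebra_simps)
  have T2: "T = real p * real p powi (int f - k)"
  proof -
    have "T = real p powi (1 + (int f - k))" unfolding T_def max_exp_W f_def by (simp add: algebra_simps)
    also have "\<dots> = real p powi 1 * real p powi (int f - k)"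
      by (rule power_int_add) (use p_gt1 in simp)
    finally show ?thesis by simp
  qed
  have "card {g \<in> carrier W. real (W.ord g) \<le> T}
      = (\<Sum>x\<in>carrier B. card {\<alpha> \<in> carrier B \<rightarrow>\<^sub>E carrier A. real (W.ord (\<alpha>, x)) \<le> T})"
    by (rule card_fib)
  also have "\<dots> = card {\<alpha> \<in> carrier B \<rightarrow>\<^sub>E carrier A. real (W.ord (\<alpha>, \<one>\<^bsub>B\<^esub>)) \<le> T}
     + (\<Sum>x\<in>carrier B - {\<one>\<^bsub>B\<^esub>}. card {\<alpha> \<in> carrier B \<rightarrow>\<^sub>E carrier A. real (W.ord (\<alpha>, x)) \<le> T})"
    using finB by (subst sum.remove[of _ "\<one>\<^bsub>B\<^esub>"]) auto
  also have "(\<Sum>x\<in>carrier B - {\<one>\<^bsub>B\<^esub>}. card {\<alpha> \<in> carrier B \<rightarrow>\<^sub>E carrier A. real (W.ord (\<alpha>, x)) \<le> T})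
      = (\<Sum>x\<in>carrier B - {\<one>\<^bsub>B\<^esub>}. c)"
    by (rule sum.cong) (auto simp: T2 c_def card_Fx)
  also have "\<dots> = (p - 1) * c" using finB cardB by simp
  finally show ?thesis unfolding T_def[symmetric] c_def f_def[symmetric] using card_F1[of T] T1 by simp
qed

end

lemma final_arith:
  fixes a g0 g1 p :: nat
  assumes "a > 0" "p > 0"
  shows "real (g1 ^ p + (p - 1) * (a ^ (p - 1) * g0)) / real (a ^ p * p)
     = (1 - 1 / real p) * (real g0 / real a) + (real g1 / real a) ^ p / real p"
proof -
  obtain m where m: "p = Suc m" using assms(2) by (cases p) auto
  have x: "real a > 0" using assms by simp
  have X: "real a ^ m > 0" using assms by simp
  have M: "real m + 1 > 0" by simp
  have D: "real a * real a ^ m + real a * (real m * real a ^ m) \<noteq> 0"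
  proof -
    have "real a * real a ^ m + real a * (real m * real a ^ m) = real a * real a ^ m * (real m + 1)"
      by (simp add: algebra_simps)
    then show ?thesis using x X M by simp
  qed
  show ?thesis using x X M D unfolding m
    by (simp add: power_divide divide_simps) (simp add: algebra_simps)
qed

theorem corollary5p1:
  fixes p :: nat and A :: "('a, 'm) monoid_scheme" and k :: int
  assumes "prime p" and "p_group p A" and "order A > 1"
  shows "r_ratio p (wreath A (integer_mod_group p)) k
           = (1 - 1 / real p) * r_ratio p A k + (r_ratio p A (k - 1)) ^ p / real p"
proof -
  have gA: "group A" and fA: "finite (carrier A)" and oA: "\<exists>N. order A = p ^ N"
    using assms(2) unfolding p_group_def by auto
  have p0: "p > 0" using assms(1) prime_gt_0_nat by blast
  have oB: "order (integer_mod_group p) = p"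
    using p0 by (simp add: order_def carrier_integer_mod_group)
  interpret wrp A "integer_mod_group p" p
    by (intro wrp.intro wr.intro wrp_axioms.intro gA group_integer_mod_group assms(1) oB fA oA)
  have oW: "order (wreath A (integer_mod_group p)) = card (carrier A) ^ p * p"
    unfolding order_def carrier_W using finB fA cardB
    by (simp add: card_cartesian_product card_PiE)
  have a0: "card (carrier A) > 0" using fA A.one_closed by (auto simp: card_gt_0_iff)
  show ?thesis
    unfolding r_ratio_def oW count_W using final_arith[OF _ p0] a0 by (simp add: order_def)
qed

end
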